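(* Let $\beta$ be a Pisot number, let $l\in(-1,0]$, $r=l+1$, and let $d$ be the $(-\beta,l)$-expansion. Then $d(x)$ is eventually periodic for every $x\in[l,r)\cap\mathbb{Q}(\beta)$.
   Context: For $\beta>1$ and $l\in(-1,0]$, $r=l+1$, the $(-\beta,l)$-transformation is $T:[l,r)\to[l,r)$, $T(x)=-\beta x-\lfloor -\beta x-l\rfloor$. The $(-\beta,l)$-expansion of $x\in[l,r)$ is the integer sequence $d(x)=x_1x_2x_3\cdots$ with $x_i=\lfloor -\beta T^{i-1}(x)-l\rfloor$. A Pisot number is a real algebraic integer $>1$ all of whose other conjugates have modulus $<1$. *)

theory Defs
  imports "HOL-Computational_Algebra.Polynomial" "HOL-Computational_Algebra.Factorial_Ring" Complex_Main
begin

text \<open>Pisot number: a real algebraic integer > 1 whose other conjugates all have modulus < 1.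
  The minimal polynomial of an algebraic integer is a monic irreducible integer polynomial.\<close>
definition pisot :: "real \<Rightarrow> bool" where
  "pisot \<beta> \<longleftrightarrow> \<beta> > 1 \<and>
     (\<exists>p :: int poly. lead_coeff p = 1 \<and> irreducible p \<and>
        poly (map_poly of_int p) (complex_of_real \<beta>) = 0 \<and>
        (\<forall>z::complex. poly (map_poly of_int p) z = 0 \<and> z \<noteq> complex_of_real \<beta> \<longrightarrow> cmod z < 1))"

definition QQ_ext :: "real \<Rightarrow> real set" where
  "QQ_ext \<beta> = {poly (map_poly of_rat p) \<beta> / poly (map_poly of_rat q) \<beta> | p q :: rat poly.
                  poly (map_poly of_rat q) \<beta> \<noteq> 0}"

definition negT :: "real \<Rightarrow> real \<Rightarrow> real \<Rightarrow> real" where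
  "negT \<beta> l x = - \<beta> * x - of_int \<lfloor>- \<beta> * x - l\<rfloor>"

text \<open>The (-beta,l)-expansion; index n (from 0) is the digit x_{n+1}.\<close>
definition negexp :: "real \<Rightarrow> real \<Rightarrow> real \<Rightarrow> nat \<Rightarrow> int" where
  "negexp \<beta> l x n = \<lfloor>- \<beta> * ((negT \<beta> l ^^ n) x) - l\<rfloor>"

definition eventually_periodic :: "(nat \<Rightarrow> 'a) \<Rightarrow> bool" where
  "eventually_periodic s \<longleftrightarrow> (\<exists>N p. p > 0 \<and> (\<forall>n\<ge>N. s (n + p) = s n))"

end

theory Submission imports Defs "Berlekamp_Zassenhaus.Square_Free_Int_To_Square_Free_GFp" begin
hide_const (open) up_ring.coeff up_ring.monom module.smult

lemma irr_sf:
  assumes irr: "irreducible (p::'a::idom poly)" shows "square_free p"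
proof(intro square_freeI)
  from irr show p0: "p \<noteq> 0" by auto
  fix a assume "a * a dvd p"
  then obtain b where paab: "p = a * (a * b)" by (elim dvdE, auto)
  assume "degree a > 0"
  then have a1: "\<not> a dvd 1" by (auto simp: poly_dvd_1)
  then have ab1: "\<not> a * b dvd 1" using dvd_mult_left by auto
  from paab irr a1 ab1 show False by force
qed

lemma roots_card:
  fixes p :: "int poly"
  assumes "irreducible p"
  shows "card {z::complex. poly (of_int_poly p) z = 0} = degree p"
proof -
  let ?P = "of_int_poly p :: rat poly"
  have "square_free ?P" using square_free_int_rat[OF irr_sf[OF assms]] .
  hence "coprime ?P (pderiv ?P)" using square_free_imp_separable separable_def by blast
  hence g: "gcd ?P (pderiv ?P) = 1" by simp
  define a where "a = fst (bezout_coefficients ?P (pderiv ?P))"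
  define b where "b = snd (bezout_coefficients ?P (pderiv ?P))"
  have ab: "a * ?P + b * pderiv ?P = 1" using bezout_coefficients_fst_snd[of ?P "pderiv ?P"] g
    unfolding a_def b_def by simp
  have conv: "map_poly (of_rat :: rat \<Rightarrow> complex) ?P = of_int_poly p"
    by (subst map_poly_map_poly) (auto simp: o_def)
  interpret rh: map_poly_comm_ring_hom "of_rat :: rat \<Rightarrow> complex" ..
  have "map_poly (of_rat :: rat \<Rightarrow> complex) (a * ?P + b * pderiv ?P) = 1" using ab by simp
  hence ab2: "map_poly of_rat a * of_int_poly p + map_poly of_rat b * pderiv (of_int_poly p) = (1::complex poly)"
    by (simp add: rh.hom_add rh.hom_mult of_rat_hom.map_poly_pderiv conv)
  have rs: "rsquarefree (of_int_poly p :: complex poly)"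
    unfolding rsquarefree_roots
  proof (intro allI notI)
    fix z :: complex assume "poly (of_int_poly p) z = 0 \<and> poly (pderiv (of_int_poly p)) z = 0"
    hence "poly (map_poly of_rat a * of_int_poly p + map_poly of_rat b * pderiv (of_int_poly p)) z = 0" by simp
    thus False using ab2 by simp
  qed
  have "(of_int_poly p :: complex poly) \<noteq> 0" using assms by auto
  with rs rsquarefree_card_degree show ?thesis by simp
qed

lemma interp_finite:
  fixes Z :: "complex set" and B :: real
  assumes fin: "finite Z" and cd: "card Z = d" and B0: "0 \<le> B"
  shows "finite {S :: int poly. degree S < d \<and> (\<forall>z\<in>Z. cmod (poly (of_int_poly S) z) \<le> B)}"
proof -
  define L where "L j = smult (1 / (\<Prod>i\<in>Z-{j}. (j - i))) (\<Prod>i\<in>Z-{j}. [:-i,1:])" for j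
  have Lj: "poly (L j) j = 1" if "j \<in> Z" for j
  proof -
    have "(\<Prod>i\<in>Z-{j}. (j - i)) \<noteq> 0" using fin by (auto simp: prod_zero_iff)
    thus ?thesis by (simp add: L_def poly_prod)
  qed
  have Li: "poly (L j) i = 0" if "j \<in> Z" "i \<in> Z" "i \<noteq> j" for i j
  proof -
    have "(\<Prod>k\<in>Z-{j}. poly [:-k,1:] i) = 0" using fin that
      by (intro prod_zero) (auto intro!: bexI[of _ i])
    thus ?thesis by (simp add: L_def poly_prod)
  qed
  have Ldeg: "degree (L j) < d" if "j \<in> Z" for j
  proof -
    have "degree (L j) \<le> degree (\<Prod>i\<in>Z-{j}. [:-i,1:])" unfolding L_def by (rule degree_smult_le)
    also have "\<dots> \<le> sum (degree \<circ> (\<lambda>i. [:-i,1:])) (Z-{j})" using fin by (intro degree_prod_sum_le) auto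
    also have "\<dots> = card (Z - {j})" by simp
    also have "\<dots> < d" using that fin cd card_Diff1_less[of Z j] by simp
    finally show ?thesis .
  qed
  have rep: "R = (\<Sum>j\<in>Z. smult (poly R j) (L j))" if "degree R < d" for R :: "complex poly"
  proof (rule poly_eqI_degree[of Z])
    fix i assume i: "i \<in> Z"
    have "poly (\<Sum>j\<in>Z. smult (poly R j) (L j)) i = (\<Sum>j\<in>Z. poly R j * poly (L j) i)"
      by (simp add: poly_sum)
    also have "\<dots> = poly R i * poly (L i) i + (\<Sum>j\<in>Z-{i}. poly R j * poly (L j) i)"
      using fin i by (simp add: sum.remove)
    also have "(\<Sum>j\<in>Z-{i}. poly R j * poly (L j) i) = 0"
      using Li i by (intro sum.neutral) auto
    finally show "poly R i = poly (\<Sum>j\<in>Z. smult (poly R j) (L j)) i" using Lj[OF i] by simp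
  next
    show "degree R < card Z" using that cd by simp
  next
    have "degree (\<Sum>j\<in>Z. smult (poly R j) (L j)) < d"
    proof (cases "d = 0")
      case True
      then have "Z = {}" using cd fin by simp
      then show ?thesis using that by simp
    next
      case False
      show ?thesis
        by (rule degree_sum_less) (use False Ldeg le_less_trans[OF degree_smult_le] in auto)
    qed
    thus "degree (\<Sum>j\<in>Z. smult (poly R j) (L j)) < card Z" using cd by simp
  qed
  define C where "C = (\<Sum>k<d. \<Sum>j\<in>Z. B * cmod (coeff (L j) k))"
  have C0: "0 \<le> C" unfolding C_def using B0 by (intro sum_nonneg) auto
  have cb: "\<bar>coeff S k\<bar> \<le> C" if S: "degree S < d" "\<forall>z\<in>Z. cmod (poly (of_int_poly S) z) \<le> B" for S k
  proof (cases "k < d")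
    case False
    then have "coeff S k = 0" using S by (intro coeff_eq_0) auto
    then show ?thesis using C0 by simp
  next
    case True
    let ?R = "of_int_poly S :: complex poly"
    have dR: "degree ?R < d" using S by simp
    have "coeff ?R k = (\<Sum>j\<in>Z. poly ?R j * coeff (L j) k)"
      by (subst rep[OF dR]) (simp add: coeff_sum)
    moreover have "coeff ?R k = of_int (coeff S k)" by simp
    ultimately have "\<bar>real_of_int (coeff S k)\<bar> = cmod (\<Sum>j\<in>Z. poly ?R j * coeff (L j) k)"
      by (metis norm_of_int)
    also have "\<dots> \<le> (\<Sum>j\<in>Z. cmod (poly ?R j * coeff (L j) k))" by (rule norm_sum)
    also have "\<dots> \<le> (\<Sum>j\<in>Z. B * cmod (coeff (L j) k))"
      using S by (intro sum_mono) (auto simp: norm_mult intro: mult_right_mono)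
    also have "\<dots> \<le> C" unfolding C_def
      using True B0 by (intro member_le_sum[of k "{..<d}" "\<lambda>k. \<Sum>j\<in>Z. B * cmod (coeff (L j) k)"]) (auto intro!: sum_nonneg)
    finally show ?thesis by linarith
  qed
  let ?M = "\<lceil>C\<rceil>"
  have "{S :: int poly. degree S < d \<and> (\<forall>z\<in>Z. cmod (poly (of_int_poly S) z) \<le> B)}
     \<subseteq> Poly ` {xs. set xs \<subseteq> {-?M..?M} \<and> length xs = d}"
  proof
    fix S :: "int poly" assume "S \<in> {S. degree S < d \<and> (\<forall>z\<in>Z. cmod (poly (of_int_poly S) z) \<le> B)}"
    hence S: "degree S < d" "\<forall>z\<in>Z. cmod (poly (of_int_poly S) z) \<le> B" by auto
    have "S = Poly (map (coeff S) [0..<d])"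
    proof (rule poly_eqI)
      fix n show "coeff S n = coeff (Poly (map (coeff S) [0..<d])) n"
        using S(1) by (cases "n < d") (auto simp: nth_default_def coeff_eq_0)
    qed
    moreover have "set (map (coeff S) [0..<d]) \<subseteq> {-?M..?M}"
    proof
      fix c assume "c \<in> set (map (coeff S) [0..<d])"
      then obtain k where "c = coeff S k" by auto
      with cb[OF S, of k] have "real_of_int \<bar>c\<bar> \<le> of_int ?M" using cb[OF S, of k] le_of_int_ceiling[of C] \<open>c = coeff S k\<close> by linarith
      hence "\<bar>c\<bar> \<le> ?M" by linarith
      thus "c \<in> {-?M..?M}" by auto
    qed
    ultimately show "S \<in> Poly ` {xs. set xs \<subseteq> {-?M..?M} \<and> length xs = d}" by force
  qed
  moreover have "finite (Poly ` {xs. set xs \<subseteq> {-?M..?M} \<and> length xs = d})"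
    by (intro finite_imageI finite_lists_length_eq) auto
  ultimately show ?thesis by (rule finite_subset)
qed

lemma ev_real: "poly (of_int_poly U :: complex poly) (of_real b) = of_real (poly (of_int_poly U) b)"
  by (induct U) auto

lemma clear_denom:
  fixes q :: "rat poly"
  shows "\<exists>c P. c > 0 \<and> (\<forall>b::real. poly (map_poly of_rat q) b = poly (of_int_poly P) b / of_int c)"
proof -
  obtain c P where r: "rat_to_int_poly q = (c, P)" by force
  from rat_to_int_poly[OF r] have q: "q = smult (inverse (rat_of_int c)) (of_int_poly P)" and c: "c > 0" by auto
  have "poly (map_poly of_rat q) b = poly (of_int_poly P) b / of_int c" for b :: real
  proof -
    have "map_poly (of_rat :: rat \<Rightarrow> real) q = smult (inverse (of_int c)) (map_poly of_rat (of_int_poly P))"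
      unfolding q by (simp add: of_rat_hom.map_poly_hom_smult of_rat_inverse)
    also have "map_poly (of_rat :: rat \<Rightarrow> real) (of_int_poly P) = of_int_poly P"
      by (subst map_poly_map_poly) (auto simp: o_def)
    finally show ?thesis by (simp add: field_simps)
  qed
  with c show ?thesis by blast
qed

lemma dyn:
  assumes b: "\<beta> > 1" and l: "-1 < l" "l \<le> 0" and x: "l \<le> x" "x < l + 1"
  shows "l \<le> (negT \<beta> l ^^ n) x \<and> (negT \<beta> l ^^ n) x < l + 1"
    and "(negT \<beta> l ^^ Suc n) x = - \<beta> * (negT \<beta> l ^^ n) x - of_int (negexp \<beta> l x n)"
    and "\<bar>real_of_int (negexp \<beta> l x n)\<bar> \<le> \<beta> + 2"
proof -
  show I: "l \<le> (negT \<beta> l ^^ n) x \<and> (negT \<beta> l ^^ n) x < l + 1"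
  proof (induct n)
    case 0 then show ?case using x by simp
  next
    case (Suc n)
    let ?w = "- \<beta> * (negT \<beta> l ^^ n) x - l"
    have "of_int \<lfloor>?w\<rfloor> \<le> ?w" "?w < of_int \<lfloor>?w\<rfloor> + 1" by linarith+
    moreover have "(negT \<beta> l ^^ Suc n) x = ?w + l - of_int \<lfloor>?w\<rfloor>"
      by (simp only: funpow.simps(2) o_apply negT_def[of \<beta> l "(negT \<beta> l ^^ n) x"])
    ultimately show ?case by linarith
  qed
  show "(negT \<beta> l ^^ Suc n) x = - \<beta> * (negT \<beta> l ^^ n) x - of_int (negexp \<beta> l x n)"
    by (simp only: funpow.simps(2) o_apply negT_def[of \<beta> l "(negT \<beta> l ^^ n) x"] negexp_def)
  let ?y = "(negT \<beta> l ^^ n) x"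
  let ?w = "- \<beta> * ?y - l"
  have "\<bar>?y\<bar> \<le> 1" using I l by auto
  hence "\<bar>\<beta> * ?y\<bar> \<le> \<beta>" using b by (simp add: abs_mult mult_left_le)
  hence "\<bar>?w\<bar> \<le> \<beta> + 1" using l by linarith
  moreover have "of_int \<lfloor>?w\<rfloor> \<le> ?w" "?w < of_int \<lfloor>?w\<rfloor> + 1" by linarith+
  ultimately show "\<bar>real_of_int (negexp \<beta> l x n)\<bar> \<le> \<beta> + 2" unfolding negexp_def by linarith
qed

lemma pc0: "poly (of_int_poly (pCons 0 W) :: complex poly) z = z * poly (of_int_poly W) z"
proof -
  have "(of_int_poly (pCons 0 W) :: complex poly) = pCons 0 (of_int_poly W)"
    by (rule poly_eqI) (simp add: coeff_pCons split: nat.split)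
  thus ?thesis by simp
qed
lemma evS_aux: "poly (of_int_poly (- pCons 0 V - smult c Q) :: complex poly) z = - z * poly (of_int_poly V) z - of_int c * poly (of_int_poly Q) z"
  by (simp add: of_int_poly_hom.hom_minus of_int_poly_hom.hom_uminus of_int_hom.map_poly_hom_smult pc0 del: pCons_0_0 minus_pCons)

theorem mainTheorem7:
  fixes \<beta> l x :: real
  assumes "pisot \<beta>"
    and "-1 < l" and "l \<le> 0"
    and "l \<le> x" and "x < l + 1"
    and "x \<in> QQ_ext \<beta>"
  shows "eventually_periodic (negexp \<beta> l x)"
proof -
  note asm = assms
  from assms(1) obtain p :: "int poly" where b1: "\<beta> > 1" and lc: "lead_coeff p = 1" and irr: "irreducible p"
    and root: "poly (of_int_poly p) (complex_of_real \<beta>) = 0"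
    and small: "\<And>z. poly (of_int_poly p) z = 0 \<Longrightarrow> z \<noteq> complex_of_real \<beta> \<Longrightarrow> cmod z < 1"
    unfolding pisot_def by blast
  define ev where "ev V z = poly (of_int_poly V :: complex poly) z" for V z
  define d where "d = degree p"
  define Z where "Z = {z. poly (of_int_poly p :: complex poly) z = 0}"
  have p0: "p \<noteq> 0" using irr by auto
  have finZ: "finite Z" unfolding Z_def using p0 by (intro poly_roots_finite) simp
  have cardZ: "card Z = d" unfolding Z_def d_def using roots_card[OF irr] .
  have bZ: "complex_of_real \<beta> \<in> Z" using root Z_def by simp
  have d0: "d > 0" using cardZ finZ bZ by (metis card_gt_0_iff empty_iff)
  define y where "y n = (negT \<beta> l ^^ n) x" for n
  define a where "a n = negexp \<beta> l x n" for n
  note D = dyn[OF b1 assms(2-5)]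
  have yb: "\<bar>y n\<bar> \<le> 1" for n using D(1)[of n] assms(2,3) unfolding y_def by auto
  have ys: "y (Suc n) = - \<beta> * y n - of_int (a n)" for n using D(2)[of n] unfolding y_def a_def .
  have ab: "\<bar>real_of_int (a n)\<bar> \<le> \<beta> + 2" for n using D(3)[of n] unfolding a_def .
  from assms(6) obtain pq qq :: "rat poly" where x: "x = poly (map_poly of_rat pq) \<beta> / poly (map_poly of_rat qq) \<beta>"
    and qq: "poly (map_poly of_rat qq) \<beta> \<noteq> 0" unfolding QQ_ext_def by blast
  obtain cp P0 where cp: "cp > 0" "\<And>b::real. poly (map_poly of_rat pq) b = poly (of_int_poly P0) b / of_int cp"
    using clear_denom[of pq] by blast
  obtain cq Q0 where cq: "cq > 0" "\<And>b::real. poly (map_poly of_rat qq) b = poly (of_int_poly Q0) b / of_int cq"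
    using clear_denom[of qq] by blast
  define P1 where "P1 = smult cq P0"
  define Q1 where "Q1 = smult cp Q0"
  have Q0nz: "poly (of_int_poly Q0) \<beta> \<noteq> 0" using qq cq by auto
  have Q1nz: "poly (of_int_poly Q1) \<beta> \<noteq> 0" using Q0nz cp unfolding Q1_def by (simp add: hom_distribs)
  have xQ: "x * poly (of_int_poly Q1) \<beta> = poly (of_int_poly P1) \<beta>"
    using Q0nz cq(1) cp(1) unfolding x cp(2) cq(2) P1_def Q1_def by (simp add: hom_distribs field_simps)
  define U where "U = rec_nat P1 (\<lambda>n V. - pCons 0 V - smult (a n) Q1)"
  have U0: "U 0 = P1" and US: "U (Suc n) = - pCons 0 (U n) - smult (a n) Q1" for n
    unfolding U_def by simp_all
  have evS: "ev (U (Suc n)) z = - z * ev (U n) z - of_int (a n) * ev Q1 z" for n z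
    unfolding US ev_def by (rule evS_aux)
  have evb: "ev (U n) (of_real \<beta>) = of_real (y n) * ev Q1 (of_real \<beta>)" for n
  proof (induct n)
    case 0
    show ?case using xQ unfolding ev_def U0 ev_real y_def by (simp flip: of_real_mult)
  next
    case (Suc n)
    show ?case unfolding evS Suc ys by (simp add: algebra_simps)
  qed
  have bnd: "\<exists>M\<ge>0. \<forall>n. cmod (ev (U n) z) \<le> M" if z: "z \<in> Z" for z
  proof (cases "z = of_real \<beta>")
    case True
    have "cmod (ev (U n) z) \<le> cmod (ev Q1 z)" for n
      unfolding True evb using yb[of n] by (simp add: norm_mult mult_left_le_one_le)
    thus ?thesis by (intro exI[of _ "cmod (ev Q1 z)"]) auto
  next
    case False
    have zs: "cmod z < 1" using small[OF _ False] z Z_def by simp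
    define A where "A = \<beta> + 2"
    define M where "M = max (cmod (ev P1 z)) (A * cmod (ev Q1 z) / (1 - cmod z))"
    have "A * cmod (ev Q1 z) = (1 - cmod z) * (A * cmod (ev Q1 z) / (1 - cmod z))" using zs by simp
    also have "\<dots> \<le> (1 - cmod z) * M" using zs unfolding M_def by (intro mult_left_mono) auto
    finally have M1: "A * cmod (ev Q1 z) \<le> (1 - cmod z) * M" .
    have "cmod (ev (U n) z) \<le> M" for n
    proof (induct n)
      case 0 then show ?case unfolding U0 M_def by simp
    next
      case (Suc n)
      have "cmod (ev (U (Suc n)) z) \<le> cmod z * cmod (ev (U n) z) + \<bar>real_of_int (a n)\<bar> * cmod (ev Q1 z)"
        unfolding evS by (rule order_trans[OF norm_triangle_ineq4]) (simp add: norm_mult)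
      also have "\<dots> \<le> cmod z * M + A * cmod (ev Q1 z)"
        using Suc ab[of n] unfolding A_def by (intro add_mono mult_left_mono mult_right_mono) auto
      also have "\<dots> \<le> M" using M1 by (simp add: algebra_simps)
      finally show ?case .
    qed
    moreover have "M \<ge> 0" unfolding M_def by (simp add: le_max_iff_disj)
    ultimately show ?thesis by blast
  qed
  define M where "M z = (SOME M. M \<ge> 0 \<and> (\<forall>n. cmod (ev (U n) z) \<le> M))" for z
  have M: "M z \<ge> 0 \<and> (\<forall>n. cmod (ev (U n) z) \<le> M z)" if "z \<in> Z" for z
    unfolding M_def using someI_ex[OF bnd[OF that]] .
  define B where "B = (\<Sum>z\<in>Z. M z)"
  have B0: "B \<ge> 0" unfolding B_def using M by (intro sum_nonneg) auto
  have UB: "cmod (ev (U n) z) \<le> B" if "z \<in> Z" for n z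
  proof -
    have "M z \<le> B" unfolding B_def using M finZ that by (intro member_le_sum) auto
    moreover have "cmod (ev (U n) z) \<le> M z" using M[OF that] by blast
    ultimately show ?thesis by linarith
  qed
  have red: "\<exists>S. degree S < d \<and> (\<forall>z\<in>Z. ev S z = ev (U n) z)" for n
  proof -
    obtain q r where qr: "pseudo_divmod (U n) p = (q, r)" by force
    from pseudo_divmod[OF p0 qr] lc have e: "U n = p * q + r" and r: "r = 0 \<or> degree r < degree p"
      by auto
    have "ev (U n) z = ev r z" if "z \<in> Z" for z
      using that unfolding Z_def ev_def e by (simp add: of_int_poly_hom.hom_add of_int_poly_hom.hom_mult)
    moreover have "degree r < d" using r d0 d_def by auto
    ultimately show ?thesis by metis
  qed
  define S where "S n = (SOME S. degree S < d \<and> (\<forall>z\<in>Z. ev S z = ev (U n) z))" for n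
  have S: "degree (S n) < d \<and> (\<forall>z\<in>Z. ev (S n) z = ev (U n) z)" for n
    unfolding S_def using someI_ex[OF red[of n]] .
  define F where "F = {S :: int poly. degree S < d \<and> (\<forall>z\<in>Z. cmod (poly (of_int_poly S) z) \<le> B)}"
  have finF: "finite F" unfolding F_def by (rule interp_finite[OF finZ cardZ B0])
  have "range S \<subseteq> F" unfolding F_def using S UB unfolding ev_def by auto
  hence "finite (range S)" using finF finite_subset by blast
  hence "\<not> inj S" using finite_imageD by blast
  then obtain m n where mn0: "m \<noteq> n" "S m = S n" unfolding inj_def by blast
  have yeq: "y i = y j" if "S i = S j" for i j
  proof -
    have "ev (U i) (of_real \<beta>) = ev (S i) (of_real \<beta>)" using S[of i] bZ by simp
    also have "\<dots> = ev (U j) (of_real \<beta>)" using S[of j] bZ that by simp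
    finally have "ev (U i) (of_real \<beta>) = ev (U j) (of_real \<beta>)" .
    hence "of_real (y i) * ev Q1 (of_real \<beta>) = of_real (y j) * ev Q1 (of_real \<beta>)" unfolding evb .
    moreover have "ev Q1 (of_real \<beta>) \<noteq> 0" unfolding ev_def ev_real using Q1nz by simp
    ultimately show ?thesis by simp
  qed
  obtain m n where mn: "m < n" "y m = y n"
  proof (cases "m < n")
    case True then show ?thesis using that[of m n] yeq[OF mn0(2)] by simp
  next
    case False then have "n < m" using mn0(1) by simp
    then show ?thesis using that[of n m] yeq[OF mn0(2)] by simp
  qed
  have per: "negexp \<beta> l x (j + (n - m)) = negexp \<beta> l x j" if mj: "m \<le> j" for j
  proof -
    obtain k where j: "j = m + k" using le_Suc_ex[OF mj] by blast
    have e: "(negT \<beta> l ^^ (k + n)) x = (negT \<beta> l ^^ (k + m)) x"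
      by (simp only: funpow_add o_apply mn(2)[unfolded y_def])
    have j2: "j + (n - m) = k + n" "j = k + m" using mn(1) j by arith+
    show ?thesis unfolding negexp_def j2(1) using e j2(2) by simp
  qed
  have P: "\<forall>j\<ge>m. negexp \<beta> l x (j + (n - m)) = negexp \<beta> l x j" using per by simp
  have "0 < n - m" using mn(1) by simp
  with P show ?thesis unfolding eventually_periodic_def by (intro exI[of _ m] exI[of _ "n - m"] conjI)
qed
end
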